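(* Let $c_0,c_1,c_2,c_3$ be numbers, not all zero, let $\{V_n\}_{n\in\mathbb Z}$ be the generalized Tetranacci sequence with $V_j=c_j$ ($j=0,1,2,3$), and let $GV_n=V_n+iV_{n-1}$ for all integers $n$ (the Gaussian generalized Tetranacci numbers). Let $\alpha,\beta,\gamma,\delta$ be the four roots of $x^4-x^3-x^2-x-1=0$ and set, for $r\in\{\alpha,\beta,\gamma,\delta\}$, $$K_r=\frac{r-1}{5r-8}\bigl(V_3r^3+(V_0+V_1+V_2)r^2+(V_1+V_2)r+V_2\bigr),$$ and $A=K_\alpha$, $B=K_\beta$, $C=K_\gamma$, $D=K_\delta$. Then for every integer $n$, $$GV_n=\left(A\alpha^{n-6}+B\beta^{n-6}+C\gamma^{n-6}+D\delta^{n-6}\right)+i\left(A\alpha^{n-7}+B\beta^{n-7}+C\gamma^{n-7}+D\delta^{n-7}\right).$$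
   Context: The generalized Tetranacci sequence is defined by $V_n=V_{n-1}+V_{n-2}+V_{n-3}+V_{n-4}$ with initial values $V_0,V_1,V_2,V_3$, and is extended to negative indices by $V_{n-4}=V_n-V_{n-1}-V_{n-2}-V_{n-3}$, so the recurrence holds for all integers $n$. Equivalently, $GV_n$ satisfies the same recurrence with $GV_0=c_0+i(c_3-c_2-c_1-c_0)$, $GV_1=c_1+ic_0$, $GV_2=c_2+ic_1$, $GV_3=c_3+ic_2$. *)

theory Defs
  imports Complex_Main
begin

definition is_gen_tetranacci :: "(int \<Rightarrow> real) \<Rightarrow> real \<Rightarrow> real \<Rightarrow> real \<Rightarrow> real \<Rightarrow> bool" where
  "is_gen_tetranacci V c0 c1 c2 c3 \<longleftrightarrow>
     V 0 = c0 \<and> V 1 = c1 \<and> V 2 = c2 \<and> V 3 = c3 \<and>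
     (\<forall>n::int. V n = V (n-1) + V (n-2) + V (n-3) + V (n-4))"

definition GV :: "(int \<Rightarrow> real) \<Rightarrow> int \<Rightarrow> complex" where
  "GV V n = complex_of_real (V n) + \<i> * complex_of_real (V (n-1))"

definition Kcoef :: "(int \<Rightarrow> real) \<Rightarrow> complex \<Rightarrow> complex" where
  "Kcoef V r = (r - 1) / (5*r - 8) *
     (of_real (V 3) * r^3 + of_real (V 0 + V 1 + V 2) * r^2 + of_real (V 1 + V 2) * r + of_real (V 2))"

end

theory Submission imports Defs begin
lemma Lj0: fixes r v0 v1 v2 v3 :: complex assumes "r^4 = r^3 + r^2 + r + 1" "5*r - 8 \<noteq> 0" shows "(r - 1) / (5*r - 8) * (v3 * r^3 + (v0+v1+v2) * r^2 + (v1+v2)*r + v2) * r^0 = ((40 * v0 + 65 * v1 + 151 * v2 + 64 * v3) * r^0 + (65 * v0 + 176 * v1 + 175 * v2 + 104 * v3) * r^1 + (151 * v0 + 175 * v1 + 190 * v2 + 129 * v3) * r^2 + (64 * v0 + 104 * v1 + 129 * v2 + 215 * v3) * r^3) / 563"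
  using assms by (simp add: field_simps) algebra
lemma Lj1: fixes r v0 v1 v2 v3 :: complex assumes "r^4 = r^3 + r^2 + r + 1" "5*r - 8 \<noteq> 0" shows "(r - 1) / (5*r - 8) * (v3 * r^3 + (v0+v1+v2) * r^2 + (v1+v2)*r + v2) * r^1 = ((64 * v0 + 104 * v1 + 129 * v2 + 215 * v3) * r^0 + (104 * v0 + 169 * v1 + 280 * v2 + 279 * v3) * r^1 + (129 * v0 + 280 * v1 + 304 * v2 + 319 * v3) * r^2 + (215 * v0 + 279 * v1 + 319 * v2 + 344 * v3) * r^3) / 563"
  using assms by (simp add: field_simps) algebra
lemma Lj2: fixes r v0 v1 v2 v3 :: complex assumes "r^4 = r^3 + r^2 + r + 1" "5*r - 8 \<noteq> 0" shows "(r - 1) / (5*r - 8) * (v3 * r^3 + (v0+v1+v2) * r^2 + (v1+v2)*r + v2) * r^2 = ((215 * v0 + 279 * v1 + 319 * v2 + 344 * v3) * r^0 + (279 * v0 + 383 * v1 + 448 * v2 + 559 * v3) * r^1 + (319 * v0 + 448 * v1 + 599 * v2 + 623 * v3) * r^2 + (344 * v0 + 559 * v1 + 623 * v2 + 663 * v3) * r^3) / 563"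
  using assms by (simp add: field_simps) algebra
lemma Lj3: fixes r v0 v1 v2 v3 :: complex assumes "r^4 = r^3 + r^2 + r + 1" "5*r - 8 \<noteq> 0" shows "(r - 1) / (5*r - 8) * (v3 * r^3 + (v0+v1+v2) * r^2 + (v1+v2)*r + v2) * r^3 = ((344 * v0 + 559 * v1 + 623 * v2 + 663 * v3) * r^0 + (559 * v0 + 838 * v1 + 942 * v2 + 1007 * v3) * r^1 + (623 * v0 + 942 * v1 + 1071 * v2 + 1222 * v3) * r^2 + (663 * v0 + 1007 * v1 + 1222 * v2 + 1286 * v3) * r^3) / 563"
  using assms by (simp add: field_simps) algebra
lemma vieta: fixes a b c d :: complex
  assumes "\<forall>x::complex. x^4 - x^3 - x^2 - x - 1 = (x - a) * (x - b) * (x - c) * (x - d)"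
  shows "a+b+c+d = 1" "a^2+b^2+c^2+d^2 = 3" "a^3+b^3+c^3+d^3 = 7"
proof -
  have h0: "-1 = a*b*c*d" using spec[OF assms, of 0] by simp
  have h1: "-3 = (1 - a) * (1 - b) * (1 - c) * (1 - d)" using spec[OF assms, of 1] by simp
  have h2: "1 = (-1 - a) * (-1 - b) * (-1 - c) * (-1 - d)" using spec[OF assms, of "-1"] by simp
  have h3: "1 = (2 - a) * (2 - b) * (2 - c) * (2 - d)" using spec[OF assms, of 2] by simp
  show "a+b+c+d = 1" using h0 h1 h2 h3 by algebra
  show "a^2+b^2+c^2+d^2 = 3" using h0 h1 h2 h3 by algebra
  show "a^3+b^3+c^3+d^3 = 7" using h0 h1 h2 h3 by algebra
qed

lemma rec_agree:
  fixes f g :: "int \<Rightarrow> complex" and k :: int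
  assumes rf: "\<And>n. f n = f (n-1) + f (n-2) + f (n-3) + f (n-4)"
    and rg: "\<And>n. g n = g (n-1) + g (n-2) + g (n-3) + g (n-4)"
    and b: "f k = g k" "f (k+1) = g (k+1)" "f (k+2) = g (k+2)" "f (k+3) = g (k+3)"
  shows "f n = g n"
proof -
  have up: "\<forall>i\<in>{0..3::int}. f (k + int m + i) = g (k + int m + i)" for m :: nat
  proof (induction m)
    case 0 then show ?case using b by (auto simp: atLeastAtMost_iff) (smt (verit))
  next
    case (Suc m)
    let ?j = "k + int m"
    have e: "f (?j+i) = g (?j+i)" if "0 \<le> i" "i \<le> 3" for i using Suc that by auto
    have "f (?j+4) = g (?j+4)"
      using rf[of "?j+4"] rg[of "?j+4"] e[of 0] e[of 1] e[of 2] e[of 3] by (simp add: algebra_simps)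
    then have "f (?j+i) = g (?j+i)" if "1 \<le> i" "i \<le> 4" for i
      using that e[of 1] e[of 2] e[of 3]
    proof -
      have "i = 1 \<or> i = 2 \<or> i = 3 \<or> i = 4" using that by arith
      then show ?thesis using e[of 1] e[of 2] e[of 3] \<open>f (?j+4) = g (?j+4)\<close> by auto
    qed
    note h = this
    show ?case
    proof
      fix i :: int assume "i \<in> {0..3}"
      then have "f (?j+(i+1)) = g (?j+(i+1))" using h by auto
      then show "f (k + int (Suc m) + i) = g (k + int (Suc m) + i)" by (simp add: algebra_simps)
    qed
  qed
  have down: "\<forall>i\<in>{0..3::int}. f (k - int m + i) = g (k - int m + i)" for m :: nat
  proof (induction m)
    case 0 then show ?case using b by (auto simp: atLeastAtMost_iff) (smt (verit))
  next
    case (Suc m)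
    let ?j = "k - int m"
    have e: "f (?j+i) = g (?j+i)" if "0 \<le> i" "i \<le> 3" for i using Suc that by auto
    have "f (?j-1) = g (?j-1)"
      using rf[of "?j+3"] rg[of "?j+3"] e[of 0] e[of 1] e[of 2] e[of 3] by (simp add: algebra_simps)
    then have "f (?j+i) = g (?j+i)" if "-1 \<le> i" "i \<le> 2" for i
      using that e[of 0] e[of 1] e[of 2]
    proof -
      have "i = -1 \<or> i = 0 \<or> i = 1 \<or> i = 2" using that by arith
      then show ?thesis using e[of 0] e[of 1] e[of 2] \<open>f (?j-1) = g (?j-1)\<close> by auto
    qed
    note h = this
    show ?case
    proof
      fix i :: int assume "i \<in> {0..3}"
      then have "f (?j+(i-1)) = g (?j+(i-1))" using h by auto
      then show "f (k - int (Suc m) + i) = g (k - int (Suc m) + i)" by (simp add: algebra_simps)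
    qed
  qed
  show ?thesis
  proof (cases "n \<ge> k")
    case True
    then show ?thesis using bspec[OF up[of "nat (n-k)"], of 0] by simp
  next
    case False
    then show ?thesis using bspec[OF down[of "nat (k-n)"], of 0] by simp
  qed
qed

theorem mainTheorem2:
  fixes c0 c1 c2 c3 :: real and V :: "int \<Rightarrow> real" and \<alpha> \<beta> \<gamma> \<delta> :: complex
  assumes "\<not> (c0 = 0 \<and> c1 = 0 \<and> c2 = 0 \<and> c3 = 0)"
    and "is_gen_tetranacci V c0 c1 c2 c3"
    and "\<forall>x::complex. x^4 - x^3 - x^2 - x - 1 = (x - \<alpha>) * (x - \<beta>) * (x - \<gamma>) * (x - \<delta>)"
  shows "\<forall>n::int. GV V n =
     (Kcoef V \<alpha> * \<alpha> powi (n-6) + Kcoef V \<beta> * \<beta> powi (n-6) + Kcoef V \<gamma> * \<gamma> powi (n-6) + Kcoef V \<delta> * \<delta> powi (n-6))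
     + \<i> * (Kcoef V \<alpha> * \<alpha> powi (n-7) + Kcoef V \<beta> * \<beta> powi (n-7) + Kcoef V \<gamma> * \<gamma> powi (n-7) + Kcoef V \<delta> * \<delta> powi (n-7))"
proof -
  note fac = assms(3)
  have recV: "\<And>n. V n = V (n-1) + V (n-2) + V (n-3) + V (n-4)"
    using assms(2) unfolding is_gen_tetranacci_def by blast
  have root: "r^4 = r^3 + r^2 + r + 1" if "r \<in> {\<alpha>,\<beta>,\<gamma>,\<delta>}" for r
    using spec[OF fac, of r] that by (auto simp: algebra_simps)
  have nz: "r \<noteq> 0" if "r \<in> {\<alpha>,\<beta>,\<gamma>,\<delta>}" for r
    using root[OF that] by auto
  have nz5: "5*r - 8 \<noteq> 0" if "r \<in> {\<alpha>,\<beta>,\<gamma>,\<delta>}" for r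
  proof
    assume "5*r - 8 = 0"
    then have r85: "r = 8/5" by (auto simp: field_simps)
    have ne: "(8/5::complex)^4 \<noteq> (8/5)^3 + (8/5)^2 + 8/5 + 1" by (simp add: power_divide)
    show False using root[OF that] ne r85 by metis
  qed
  have prec: "r powi n = r powi (n-1) + r powi (n-2) + r powi (n-3) + r powi (n-4)"
    if "r \<in> {\<alpha>,\<beta>,\<gamma>,\<delta>}" for r n
  proof -
    have pw: "r powi (n-4+ int k) = r powi (n-4) * r^k" for k :: nat
      using nz[OF that] by (simp add: power_int_add)
    have "r powi n = r powi (n-4) * r^4" using pw[of 4] by simp
    also have "\<dots> = r powi (n-4) * r^3 + r powi (n-4) * r^2 + r powi (n-4) * r + r powi (n-4)"
      using root[OF that] by (simp add: algebra_simps)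
    also have "\<dots> = r powi (n-1) + r powi (n-2) + r powi (n-3) + r powi (n-4)"
      using pw[of 3] pw[of 2] pw[of 1] by simp
    finally show ?thesis .
  qed
  define W where "W n = Kcoef V \<alpha> * \<alpha> powi (n-6) + Kcoef V \<beta> * \<beta> powi (n-6) + Kcoef V \<gamma> * \<gamma> powi (n-6) + Kcoef V \<delta> * \<delta> powi (n-6)" for n
  have recW: "W n = W (n-1) + W (n-2) + W (n-3) + W (n-4)" for n
  proof -
    have "r powi (n-6) = r powi (n-1-6) + r powi (n-2-6) + r powi (n-3-6) + r powi (n-4-6)"
      if "r \<in> {\<alpha>,\<beta>,\<gamma>,\<delta>}" for r
      using prec[OF that, of "n-6"] by (simp add: algebra_simps)
    then show ?thesis unfolding W_def by (simp add: algebra_simps)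
  qed
  have recV': "complex_of_real (V n) = complex_of_real (V (n-1)) + complex_of_real (V (n-2)) + complex_of_real (V (n-3)) + complex_of_real (V (n-4))" for n
    using recV[of n] by (metis of_real_add)
  define v0 where "v0 = complex_of_real (V 0)"
  define v1 where "v1 = complex_of_real (V 1)"
  define v2 where "v2 = complex_of_real (V 2)"
  define v3 where "v3 = complex_of_real (V 3)"
  have Kc: "Kcoef V r = (r - 1) / (5*r - 8) * (v3 * r^3 + (v0+v1+v2) * r^2 + (v1+v2)*r + v2)" for r
    unfolding Kcoef_def v0_def v1_def v2_def v3_def by simp
  have s1: "\<alpha>+\<beta>+\<gamma>+\<delta> = 1" and s2: "\<alpha>^2+\<beta>^2+\<gamma>^2+\<delta>^2 = 3" and s3: "\<alpha>^3+\<beta>^3+\<gamma>^3+\<delta>^3 = 7"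
    using vieta[OF fac] by auto
  have V4: "complex_of_real (V 4) = v0+v1+v2+v3" using recV'[of 4] unfolding v0_def v1_def v2_def v3_def by simp
  have V5: "complex_of_real (V 5) = v0+2*v1+2*v2+2*v3" using recV'[of 5] V4 unfolding v0_def v1_def v2_def v3_def by simp
  have V6: "complex_of_real (V 6) = 2*v0+3*v1+4*v2+4*v3" using recV'[of 6] V4 V5 unfolding v0_def v1_def v2_def v3_def by simp
  have V7: "complex_of_real (V 7) = 4*v0+6*v1+7*v2+8*v3" using recV'[of 7] V4 V5 V6 unfolding v0_def v1_def v2_def v3_def by simp
  have V8: "complex_of_real (V 8) = 8*v0+12*v1+14*v2+15*v3" using recV'[of 8] V4 V5 V6 V7 unfolding v0_def v1_def v2_def v3_def by simp
  have V9: "complex_of_real (V 9) = 15*v0+23*v1+27*v2+29*v3" using recV'[of 9] V5 V6 V7 V8 unfolding v0_def v1_def v2_def v3_def by simp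
  have ins: "\<alpha> \<in> {\<alpha>,\<beta>,\<gamma>,\<delta>}" "\<beta> \<in> {\<alpha>,\<beta>,\<gamma>,\<delta>}" "\<gamma> \<in> {\<alpha>,\<beta>,\<gamma>,\<delta>}" "\<delta> \<in> {\<alpha>,\<beta>,\<gamma>,\<delta>}" by auto
  have W6: "W 6 = complex_of_real (V 6)"
  proof -
    have "W 6 = Kcoef V \<alpha> * \<alpha>^0 + Kcoef V \<beta> * \<beta>^0 + Kcoef V \<gamma> * \<gamma>^0 + Kcoef V \<delta> * \<delta>^0"
      unfolding W_def by simp
    also have "\<dots> = ((40 * v0 + 65 * v1 + 151 * v2 + 64 * v3) * 4 + (65 * v0 + 176 * v1 + 175 * v2 + 104 * v3) * (\<alpha>+\<beta>+\<gamma>+\<delta>) + (151 * v0 + 175 * v1 + 190 * v2 + 129 * v3) * (\<alpha>^2+\<beta>^2+\<gamma>^2+\<delta>^2) + (64 * v0 + 104 * v1 + 129 * v2 + 215 * v3) * (\<alpha>^3+\<beta>^3+\<gamma>^3+\<delta>^3)) / 563"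
      unfolding Kc Lj0[OF root[OF ins(1)] nz5[OF ins(1)]] Lj0[OF root[OF ins(2)] nz5[OF ins(2)]]
        Lj0[OF root[OF ins(3)] nz5[OF ins(3)]] Lj0[OF root[OF ins(4)] nz5[OF ins(4)]]
      by (simp add: field_simps)
    also have "\<dots> = complex_of_real (V 6)" unfolding s1 s2 s3 V6 by (simp add: field_simps)
    finally show ?thesis .
  qed
  have W7: "W 7 = complex_of_real (V 7)"
  proof -
    have "W 7 = Kcoef V \<alpha> * \<alpha>^1 + Kcoef V \<beta> * \<beta>^1 + Kcoef V \<gamma> * \<gamma>^1 + Kcoef V \<delta> * \<delta>^1"
      unfolding W_def by simp
    also have "\<dots> = ((64 * v0 + 104 * v1 + 129 * v2 + 215 * v3) * 4 + (104 * v0 + 169 * v1 + 280 * v2 + 279 * v3) * (\<alpha>+\<beta>+\<gamma>+\<delta>) + (129 * v0 + 280 * v1 + 304 * v2 + 319 * v3) * (\<alpha>^2+\<beta>^2+\<gamma>^2+\<delta>^2) + (215 * v0 + 279 * v1 + 319 * v2 + 344 * v3) * (\<alpha>^3+\<beta>^3+\<gamma>^3+\<delta>^3)) / 563"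
      unfolding Kc Lj1[OF root[OF ins(1)] nz5[OF ins(1)]] Lj1[OF root[OF ins(2)] nz5[OF ins(2)]]
        Lj1[OF root[OF ins(3)] nz5[OF ins(3)]] Lj1[OF root[OF ins(4)] nz5[OF ins(4)]]
      by (simp add: field_simps)
    also have "\<dots> = complex_of_real (V 7)" unfolding s1 s2 s3 V7 by (simp add: field_simps)
    finally show ?thesis .
  qed
  have W8: "W 8 = complex_of_real (V 8)"
  proof -
    have "W 8 = Kcoef V \<alpha> * \<alpha>^2 + Kcoef V \<beta> * \<beta>^2 + Kcoef V \<gamma> * \<gamma>^2 + Kcoef V \<delta> * \<delta>^2"
      unfolding W_def by simp
    also have "\<dots> = ((215 * v0 + 279 * v1 + 319 * v2 + 344 * v3) * 4 + (279 * v0 + 383 * v1 + 448 * v2 + 559 * v3) * (\<alpha>+\<beta>+\<gamma>+\<delta>) + (319 * v0 + 448 * v1 + 599 * v2 + 623 * v3) * (\<alpha>^2+\<beta>^2+\<gamma>^2+\<delta>^2) + (344 * v0 + 559 * v1 + 623 * v2 + 663 * v3) * (\<alpha>^3+\<beta>^3+\<gamma>^3+\<delta>^3)) / 563"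
      unfolding Kc Lj2[OF root[OF ins(1)] nz5[OF ins(1)]] Lj2[OF root[OF ins(2)] nz5[OF ins(2)]]
        Lj2[OF root[OF ins(3)] nz5[OF ins(3)]] Lj2[OF root[OF ins(4)] nz5[OF ins(4)]]
      by (simp add: field_simps)
    also have "\<dots> = complex_of_real (V 8)" unfolding s1 s2 s3 V8 by (simp add: field_simps)
    finally show ?thesis .
  qed
  have W9: "W 9 = complex_of_real (V 9)"
  proof -
    have "W 9 = Kcoef V \<alpha> * \<alpha>^3 + Kcoef V \<beta> * \<beta>^3 + Kcoef V \<gamma> * \<gamma>^3 + Kcoef V \<delta> * \<delta>^3"
      unfolding W_def by simp
    also have "\<dots> = ((344 * v0 + 559 * v1 + 623 * v2 + 663 * v3) * 4 + (559 * v0 + 838 * v1 + 942 * v2 + 1007 * v3) * (\<alpha>+\<beta>+\<gamma>+\<delta>) + (623 * v0 + 942 * v1 + 1071 * v2 + 1222 * v3) * (\<alpha>^2+\<beta>^2+\<gamma>^2+\<delta>^2) + (663 * v0 + 1007 * v1 + 1222 * v2 + 1286 * v3) * (\<alpha>^3+\<beta>^3+\<gamma>^3+\<delta>^3)) / 563"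
      unfolding Kc Lj3[OF root[OF ins(1)] nz5[OF ins(1)]] Lj3[OF root[OF ins(2)] nz5[OF ins(2)]]
        Lj3[OF root[OF ins(3)] nz5[OF ins(3)]] Lj3[OF root[OF ins(4)] nz5[OF ins(4)]]
      by (simp add: field_simps)
    also have "\<dots> = complex_of_real (V 9)" unfolding s1 s2 s3 V9 by (simp add: field_simps)
    finally show ?thesis .
  qed
  have agree: "W n = complex_of_real (V n)" for n
    using rec_agree[of W "\<lambda>n. complex_of_real (V n)", OF recW recV', of 6 n] W6 W7 W8 W9 by simp
  show ?thesis
  proof
    fix n :: int
    have "GV V n = W n + \<i> * W (n-1)" unfolding GV_def agree ..
    also have "W (n-1) = Kcoef V \<alpha> * \<alpha> powi (n-7) + Kcoef V \<beta> * \<beta> powi (n-7) + Kcoef V \<gamma> * \<gamma> powi (n-7) + Kcoef V \<delta> * \<delta> powi (n-7)"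
      unfolding W_def by (simp add: algebra_simps)
    finally have "GV V n = W n + \<i> * (Kcoef V \<alpha> * \<alpha> powi (n-7) + Kcoef V \<beta> * \<beta> powi (n-7) + Kcoef V \<gamma> * \<gamma> powi (n-7) + Kcoef V \<delta> * \<delta> powi (n-7))" .
    then show "GV V n = (Kcoef V \<alpha> * \<alpha> powi (n-6) + Kcoef V \<beta> * \<beta> powi (n-6) + Kcoef V \<gamma> * \<gamma> powi (n-6) + Kcoef V \<delta> * \<delta> powi (n-6)) + \<i> * (Kcoef V \<alpha> * \<alpha> powi (n-7) + Kcoef V \<beta> * \<beta> powi (n-7) + Kcoef V \<gamma> * \<gamma> powi (n-7) + Kcoef V \<delta> * \<delta> powi (n-7))" by (simp only: W_def)
  qed
qed
end
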